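(* Consider the second order operator $\mathcal{L}$ on functions of $(x,y)\in\mathbb{R}^2$, with $Z=x+iy$, whose carré du champ $\Gamma$ and action on coordinates are given (using complex notation, with $\Gamma$ complex bilinear and $\mathcal{L}$ complex linear) by $$\Gamma(Z,Z)=\bar Z-Z^2,\quad \Gamma(\bar Z,\bar Z)=Z-\bar Z^2,\quad \Gamma(Z,\bar Z)=\tfrac12(1-Z\bar Z),\quad \mathcal{L}(Z)=-Z,\quad \mathcal{L}(\bar Z)=-\bar Z.$$ Let $D(Z,\bar Z)=\Gamma(Z,\bar Z)^2-\Gamma(Z,Z)\Gamma(\bar Z,\bar Z)=\tfrac14(1-Z\bar Z)^2-(\bar Z-Z^2)(Z-\bar Z^2)$. Let $\Omega_D$ be the deltoid domain (the bounded open region of $\mathbb{C}$ enclosed by the deltoid curve). Then: (1) $D(Z,\bar Z)>0$ on $\Omega_D$; (2) $\{D(Z,\bar Z)=0\}$ is the deltoid curve, i.e. the boundary of $\Omega_D$; (3) the reversible measure of $\mathcal{L}$ on $\Omega_D$ has density (up to a multiplicative constant) $D(Z,\bar Z)^{-1/2}$ with respect to Lebesgue measure $dx\,dy$, i.e. with $\rho=D^{-1/2}$ one has $\mathcal{L}f=\rho^{-1}\sum_{i,j}\partial_i(\rho\, g^{ij}\partial_j f)$ on $\Omega_D$, where $(g^{ij})$ is the matrix $\Gamma(x_i,x_j)$ in the real coordinates $(x_1,x_2)=(x,y)$; (4) if $z\in\mathbb{R}^2$, $z_k=e^{i\,u_k\cdot z}$ ($k=1,2,3$) with $u_1=(1,0)$,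 $u_2=(-\tfrac12,\tfrac{\sqrt3}2)$, $u_3=(-\tfrac12,-\tfrac{\sqrt3}2)$, and $Z=\frac13(z_1+z_2+z_3)$, then $$D(Z,\bar Z)=-\frac{(z_1-z_2)^2(z_2-z_3)^2(z_3-z_1)^2}{2^2\,3^3}.$$
   Context: The deltoid (Steiner hypocycloid) curve relevant here is the hypocycloid with cusps at the three cube roots of unity $1,j,\bar j$, parametrized by $t\mapsto \frac13(2e^{it}+e^{-2it})$, $t\in[0,2\pi]$; $\Omega_D$ is the bounded open region it encloses, which is the interior of the image of $\mathbb{R}^2$ under the map $z\mapsto \frac13\sum_k e^{i u_k\cdot z}$. Real and complex conventions: $\Gamma(Z,Z)=\Gamma(x,x)-\Gamma(y,y)+2i\Gamma(x,y)$, $\Gamma(Z,\bar Z)=\Gamma(x,x)+\Gamma(y,y)$, $\mathcal{L}(Z)=\mathcal{L}(x)+i\mathcal{L}(y)$. *)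

theory Defs
  imports "HOL-Analysis.Analysis"
begin

definition deltoid_curve :: "complex set" where
  "deltoid_curve = (\<lambda>t. (2 * exp (\<i> * of_real t) + exp (- 2 * \<i> * of_real t)) / 3) ` {0..2*pi}"

definition deltoid_domain :: "complex set" where
  "deltoid_domain = inside deltoid_curve"

definition GammaZZ :: "complex \<Rightarrow> complex" where
  "GammaZZ Z = cnj Z - Z^2"
definition GammaZbZb :: "complex \<Rightarrow> complex" where
  "GammaZbZb Z = Z - (cnj Z)^2"
definition GammaZZb :: "complex \<Rightarrow> complex" where
  "GammaZZb Z = (1 - Z * cnj Z) / 2"

definition Dfun :: "complex \<Rightarrow> complex" where
  "Dfun Z = (GammaZZb Z)^2 - GammaZZ Z * GammaZbZb Z"

text \<open>Real coefficients, via Gamma(Z,Z) = Gxx - Gyy + 2i Gxy, Gamma(Z,Zbar) = Gxx + Gyy.\<close>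
definition gxx :: "complex \<Rightarrow> real" where
  "gxx Z = Re ((GammaZZb Z + GammaZZ Z) / 2)"
definition gyy :: "complex \<Rightarrow> real" where
  "gyy Z = Re ((GammaZZb Z - GammaZZ Z) / 2)"
definition gxy :: "complex \<Rightarrow> real" where
  "gxy Z = Im (GammaZZ Z) / 2"

text \<open>L(Z) = -Z, i.e. L(x) = -x, L(y) = -y.\<close>
definition Lx :: "complex \<Rightarrow> real" where "Lx Z = - Re Z"
definition Ly :: "complex \<Rightarrow> real" where "Ly Z = - Im Z"

definition pdx :: "(complex \<Rightarrow> real) \<Rightarrow> complex \<Rightarrow> real" where
  "pdx f Z = deriv (\<lambda>t. f (Complex t (Im Z))) (Re Z)"
definition pdy :: "(complex \<Rightarrow> real) \<Rightarrow> complex \<Rightarrow> real" where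
  "pdy f Z = deriv (\<lambda>t. f (Complex (Re Z) t)) (Im Z)"

definition Lop :: "(complex \<Rightarrow> real) \<Rightarrow> complex \<Rightarrow> real" where
  "Lop f Z = gxx Z * pdx (pdx f) Z + gxy Z * pdx (pdy f) Z
           + gxy Z * pdy (pdx f) Z + gyy Z * pdy (pdy f) Z
           + Lx Z * pdx f Z + Ly Z * pdy f Z"

definition rho :: "complex \<Rightarrow> real" where
  "rho Z = (Re (Dfun Z)) powr (-1/2)"

end

theory Submission
  imports Defs
begin


definition Dr :: "real \<Rightarrow> real \<Rightarrow> real" where
 "Dr x y = ((1 - x^2 - y^2)/2)^2 - ((x - x^2 + y^2)^2 + (y + 2*x*y)^2)"

lemma Dfun_real: "Dfun Z = complex_of_real (Dr (Re Z) (Im Z))"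
  by (simp add: Dfun_def GammaZZ_def GammaZZb_def GammaZbZb_def Dr_def complex_eq_iff power2_eq_square algebra_simps)

lemma gxx_eq: "gxx Z = (1 + 2*Re Z - 3*(Re Z)^2 + (Im Z)^2)/4"
  by (simp add: gxx_def GammaZZ_def GammaZZb_def power2_eq_square field_simps)
lemma gyy_eq: "gyy Z = (1 - 2*Re Z + (Re Z)^2 - 3*(Im Z)^2)/4"
  by (simp add: gyy_def GammaZZ_def GammaZZb_def power2_eq_square field_simps)
lemma gxy_eq: "gxy Z = (- Im Z - 2*Re Z*Im Z)/2"
  by (simp add: gxy_def GammaZZ_def power2_eq_square algebra_simps)

lemma part4:
  fixes a b :: real
  shows "let z1 = exp (\<i> * of_real a);
              z2 = exp (\<i> * of_real (- a / 2 + sqrt 3 / 2 * b));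
              z3 = exp (\<i> * of_real (- a / 2 - sqrt 3 / 2 * b));
              Z = (z1 + z2 + z3) / 3
          in Dfun Z = - ((z1 - z2)^2 * (z2 - z3)^2 * (z3 - z1)^2) / (2^2 * 3^3)"
proof -
  define z1 where "z1 = exp (\<i> * of_real a)"
  define z2 where "z2 = exp (\<i> * of_real (- a / 2 + sqrt 3 / 2 * b))"
  define z3 where "z3 = exp (\<i> * of_real (- a / 2 - sqrt 3 / 2 * b))"
  have cj: "cnj (exp (\<i> * of_real t)) = inverse (exp (\<i> * of_real t))" for t :: real
    by (simp add: exp_cnj exp_minus)
  have nz: "z1 \<noteq> 0" "z2 \<noteq> 0" by (auto simp: z1_def z2_def)
  have "z1 * z2 * z3 = exp (\<i> * of_real a + \<i> * of_real (- a / 2 + sqrt 3 / 2 * b) + \<i> * of_real (- a / 2 - sqrt 3 / 2 * b))"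
    by (simp add: z1_def z2_def z3_def exp_add)
  also have "\<dots> = 1" by (simp add: algebra_simps)
  finally have p: "z1 * z2 * z3 = 1" .
  hence z3: "z3 = inverse (z1 * z2)" by (metis mult.assoc mult.commute inverse_unique)
  have c1: "cnj z1 = inverse z1" unfolding z1_def by (rule cj)
  have c2: "cnj z2 = inverse z2" unfolding z2_def by (rule cj)
  have "cnj z3 = inverse z3" unfolding z3_def by (rule cj)
  hence c3: "cnj z3 = z1 * z2" using z3 by simp
  have "Dfun ((z1 + z2 + z3) / 3) = - ((z1 - z2)^2 * (z2 - z3)^2 * (z3 - z1)^2) / (2^2 * 3^3)"
    unfolding Dfun_def GammaZZ_def GammaZZb_def GammaZbZb_def
    apply (simp add: c1 c2 c3 complex_cnj_divide complex_cnj_add z3)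
    using nz apply (simp add: field_simps)
    apply algebra
    done
  then show ?thesis by (simp add: Let_def z1_def z2_def z3_def)
qed



lemma cnj_unit: "norm r = 1 \<Longrightarrow> cnj r = inverse r"
  by (metis complex_div_cnj div_by_1 inverse_eq_divide mult_1 power_one norm_one of_real_1 complex_cnj_one)

lemma deltoid_char: "Z \<in> deltoid_curve \<longleftrightarrow> (\<exists>r. norm r = 1 \<and> Z = (2*r + cnj r ^ 2)/3)"
proof
  assume "Z \<in> deltoid_curve"
  then obtain t where Z: "Z = (2 * exp (\<i> * of_real t) + exp (- 2 * \<i> * of_real t)) / 3"
    by (auto simp: deltoid_curve_def)
  have "exp (- 2 * \<i> * of_real t) = cnj (exp (\<i> * of_real t)) ^ 2"
    by (simp add: exp_cnj mult.assoc flip: exp_of_nat_mult)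
  then show "\<exists>r. norm r = 1 \<and> Z = (2*r + cnj r ^ 2)/3" using Z
    by (intro exI[of _ "exp (\<i> * of_real t)"]) auto
next
  assume "\<exists>r. norm r = 1 \<and> Z = (2*r + cnj r ^ 2)/3"
  then obtain r where r: "norm r = 1" "Z = (2*r + cnj r ^ 2)/3" by blast
  define t where "t = Arg2pi r"
  have t: "0 \<le> t" "t < 2*pi" "r = exp (\<i> * of_real t)"
    using Arg2pi[of r] r(1) by (auto simp: t_def is_Arg_def)
  have "exp (- 2 * \<i> * of_real t) = cnj (exp (\<i> * of_real t)) ^ 2"
    by (simp add: exp_cnj mult.assoc flip: exp_of_nat_mult)
  then show "Z \<in> deltoid_curve" unfolding deltoid_curve_def using t r
    by (intro image_eqI[of _ _ t]) auto
qed

lemma D_zero_curve: "Dfun Z = 0 \<longleftrightarrow> Z \<in> deltoid_curve"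
proof
  assume D: "Dfun Z = 0"
  define w where "w = cnj Z - Z^2"
  define G where "G = (1 - Z * cnj Z)/2"
  have Dw: "Dfun Z = G^2 - w * cnj w"
    by (simp add: Dfun_def GammaZZ_def GammaZbZb_def GammaZZb_def w_def G_def)
  have E: "3*Z*w*cnj w - 2*G*cnj w - w^2 = -4*Z*Dfun Z"
    unfolding Dfun_def GammaZZ_def GammaZbZb_def GammaZZb_def w_def G_def
    by (simp add: field_simps power2_eq_square)
  have ZZ: "Z * cnj Z = of_real (norm Z ^ 2)" by (rule complex_norm_square[symmetric])
  have Greal: "G = of_real ((1 - norm Z ^ 2)/2)" by (simp add: G_def ZZ)
  have ww: "w * cnj w = of_real (norm w ^ 2)" by (rule complex_norm_square[symmetric])
  show "Z \<in> deltoid_curve"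
  proof (cases "w = 0")
    case True
    with D Dw have "G = 0" by simp
    hence Z1: "Z * cnj Z = 1" by (simp add: G_def)
    have cz: "cnj Z = Z^2" using True by (simp add: w_def)
    have "norm Z ^ 2 = 1" using Z1 ZZ by (metis of_real_eq_1_iff)
    hence "norm Z = 1" using norm_ge_zero[of Z] by (simp add: power2_eq_1_iff)
    moreover have "Z = (2*Z + cnj Z ^ 2)/3"
    proof -
      have "Z^3 = 1" using Z1 cz by (simp add: power3_eq_cube power2_eq_square mult.assoc)
      then show ?thesis using cz by (simp add: field_simps power2_eq_square power3_eq_cube)
    qed
    ultimately show ?thesis unfolding deltoid_char by blast
  next
    case False
    have cw: "cnj w \<noteq> 0" using False by simp
    have G2: "G^2 = w * cnj w" using D Dw by simp
    have "norm (G / w) = 1"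
    proof -
      have "norm (G^2) = norm (w * cnj w)" using G2 by simp
      hence "(norm G)^2 = (norm w)^2" by (simp add: norm_mult norm_power power2_eq_square)
      hence "norm G = norm w" by (simp add: power2_eq_iff_nonneg)
      thus ?thesis using False by (simp add: norm_divide)
    qed
    moreover have "Z = (2*(G/w) + cnj (G/w) ^ 2)/3"
    proof -
      have cG: "cnj G = G" by (simp add: Greal)
      have e0: "3*Z*w*cnj w - 2*G*cnj w - w^2 = 0" using E D by simp
      have "cnj (G/w) ^ 2 = G^2 / (cnj w)^2" by (simp add: cG power_divide)
      also have "\<dots> = w / cnj w" using G2 cw by (simp add: power2_eq_square field_simps)
      finally have "cnj (G/w) ^ 2 = w / cnj w" .
      then show ?thesis using e0 False cw
        by (simp add: field_simps power2_eq_square)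
    qed
    ultimately show ?thesis unfolding deltoid_char by blast
  qed
next
  assume "Z \<in> deltoid_curve"
  then obtain r where r: "norm r = 1" "Z = (2*r + cnj r ^ 2)/3" unfolding deltoid_char by blast
  have c: "cnj r = inverse r" using r(1) by (rule cnj_unit)
  have nz: "r \<noteq> 0" using r(1) by auto
  have "cnj Z = (2*cnj r + r^2)/3" unfolding r(2) by (simp add: complex_cnj_divide)
  hence cZ: "cnj Z = (2*inverse r + r^2)/3" using c by simp
  have Z: "Z = (2*r + inverse r^2)/3" using r(2) c by simp
  have "Dfun Z = ((1 - Z * cnj Z) / 2)^2 - (cnj Z - Z^2) * (Z - (cnj Z)^2)"
    by (simp add: Dfun_def GammaZZ_def GammaZbZb_def GammaZZb_def)
  also have "\<dots> = 0" unfolding cZ unfolding Z using nz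
    by (simp add: field_simps) algebra
  finally show "Dfun Z = 0" .
qed



lemma unit_inj:
  assumes a: "norm a = 1" and b: "norm b = 1" and e: "2*a + cnj a ^ 2 = 2*b + cnj b ^ 2"
  shows "a = b"
proof (rule ccontr)
  assume ne: "a \<noteq> b"
  have ca: "cnj a = inverse a" and cb: "cnj b = inverse b" using a b by (auto intro: cnj_unit)
  have nz: "a \<noteq> 0" "b \<noteq> 0" using a b by auto
  have "(a - b) * (2 * a^2 * b^2 - (a + b)) = 0"
    using e nz unfolding ca cb by (simp add: field_simps) algebra
  hence "2 * a^2 * b^2 = a + b" using ne by simp
  hence "norm (a + b) = 2" using a b by (metis norm_mult norm_power norm_numeral power_one mult_1_right)
  hence "norm (a + b) = norm a + norm b" using a b by simp
  hence "norm a *\<^sub>R b = norm b *\<^sub>R a" by (simp add: norm_triangle_eq)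
  thus False using a b ne by simp
qed

lemma div3: "(p::complex)/3 = q/3 \<Longrightarrow> p = q" by simp

definition dpath :: "real \<Rightarrow> complex" where
  "dpath u = (2 * exp (\<i> * of_real (2*pi*u)) + exp (- 2 * \<i> * of_real (2*pi*u))) / 3"

lemma dpath_alt: "dpath u = (2 * exp (\<i> * of_real (2*pi*u)) + cnj (exp (\<i> * of_real (2*pi*u))) ^ 2) / 3"
proof -
  have "exp (- 2 * \<i> * of_real (2*pi*u)) = cnj (exp (\<i> * of_real (2*pi*u))) ^ 2"
    by (simp add: exp_cnj mult.assoc flip: exp_of_nat_mult)
  thus ?thesis by (simp add: dpath_def)
qed

lemma path_dpath: "path dpath"
  unfolding path_def dpath_def by (intro continuous_intros) auto

lemma image_dpath: "path_image dpath = deltoid_curve"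
proof -
  have "path_image dpath = (\<lambda>t. (2 * exp (\<i> * of_real t) + exp (- 2 * \<i> * of_real t)) / 3) ` ((\<lambda>u. 2*pi*u) ` {0..1})"
    unfolding path_image_def dpath_def image_image by simp
  also have "(\<lambda>u. 2*pi*u) ` {0..1} = {0..2*pi}"
  proof
    show "(\<lambda>u. 2*pi*u) ` {0..1} \<subseteq> {0..2*pi}" by auto
    show "{0..2*pi} \<subseteq> (\<lambda>u. 2*pi*u) ` {0..1}"
    proof
      fix t assume "t \<in> {0..2*pi::real}"
      then show "t \<in> (\<lambda>u. 2*pi*u) ` {0..1}"
        by (intro image_eqI[of _ _ "t/(2*pi)"]) (auto simp: field_simps)
    qed
  qed
  finally show ?thesis by (simp add: deltoid_curve_def)
qed

lemma loop_dpath: "pathfinish dpath = pathstart dpath"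
proof -
  have "exp (\<i> * of_real (2*pi)) = 1"
    unfolding exp_eq_1 by (intro conjI exI[of _ "1"]) simp_all
  moreover have "exp (- 2 * \<i> * of_real (2*pi)) = 1"
    unfolding exp_eq_1 by (intro conjI exI[of _ "-2"]) simp_all
  with \<open>exp (\<i> * of_real (2*pi)) = 1\<close> show ?thesis
    by (simp add: pathfinish_def pathstart_def dpath_def)
qed

lemma simple_dpath: "simple_path dpath"
  unfolding simple_path_def
proof (intro conjI path_dpath)
  show "loop_free dpath"
    unfolding loop_free_def
  proof (intro ballI impI)
    fix x y :: real assume x: "x \<in> {0..1}" and y: "y \<in> {0..1}" and e: "dpath x = dpath y"
    let ?a = "exp (\<i> * of_real (2*pi*x))" and ?b = "exp (\<i> * of_real (2*pi*y))"
    have h: "(2*?a + cnj ?a^2)/3 = (2*?b + cnj ?b^2)/3" using e by (simp only: dpath_alt)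
    have h3: "2*?a + cnj ?a^2 = 2*?b + cnj ?b^2" by (rule div3[OF h])
    have "?a = ?b"
      by (rule unit_inj[OF _ _ h3]) simp_all
    then obtain n :: int where n: "\<i> * of_real (2*pi*x) = \<i> * of_real (2*pi*y) + of_int (2*n) * pi * \<i>"
      unfolding exp_eq by blast
    hence "2*pi*x = 2*pi*y + 2*n*pi"
      by (simp add: complex_eq_iff)
    hence "pi * (2*x - 2*y - 2*n) = 0" by (simp add: algebra_simps)
    hence "2*x - 2*y - 2*n = 0" by simp
    hence xy: "x = y + n" by simp
    with x y have "n = 0 \<or> n = 1 \<or> n = -1" by auto
    with xy x y show "x = y \<or> x = 0 \<and> y = 1 \<or> x = 1 \<and> y = 0" by auto
  qed
qed

lemma jordan: "inside deltoid_curve \<noteq> {} \<and>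
          open(inside deltoid_curve) \<and>
          connected(inside deltoid_curve) \<and>
          outside deltoid_curve \<noteq> {} \<and>
          open(outside deltoid_curve) \<and>
          connected(outside deltoid_curve) \<and>
          bounded(inside deltoid_curve) \<and>
          \<not> bounded(outside deltoid_curve) \<and>
          inside deltoid_curve \<inter> outside deltoid_curve = {} \<and>
          inside deltoid_curve \<union> outside deltoid_curve = - deltoid_curve \<and>
          frontier(inside deltoid_curve) = deltoid_curve \<and>
          frontier(outside deltoid_curve) = deltoid_curve"
  using Jordan_inside_outside[OF simple_dpath loop_dpath] unfolding image_dpath .



lemma conn_sign:
  fixes f :: "complex \<Rightarrow> real"
  assumes "connected S" "continuous_on S f" "\<forall>x\<in>S. f x \<noteq> 0" "a \<in> S" "b \<in> S" "f a > 0"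
  shows "f b > 0"
proof (rule ccontr)
  assume "\<not> f b > 0"
  hence fb: "f b < 0" using assms by force
  have "connected (f ` S)" using assms by (intro connected_continuous_image)
  hence "0 \<in> f ` S" using fb assms(4,5,6) unfolding connected_iff_interval
    by (metis image_eqI less_eq_real_def)
  thus False using assms(3) by auto
qed

definition Fr :: "complex \<Rightarrow> real" where "Fr Z = Dr (Re Z) (Im Z)"

lemma Fr_cont: "continuous_on S Fr"
  unfolding Fr_def Dr_def by (intro continuous_intros) auto

lemma Fr_zero: "Fr Z = 0 \<longleftrightarrow> Z \<in> deltoid_curve"
  using D_zero_curve[of Z] Dfun_real[of Z] by (simp add: Fr_def)

lemma Fr_big: assumes "norm Z > 1" shows "Fr Z < 0"
proof -
  define w where "w = cnj Z - Z^2"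
  define \<rho> where "\<rho> = norm Z"
  have ZZ: "Z * cnj Z = of_real (\<rho> ^ 2)" unfolding \<rho>_def by (rule complex_norm_square[symmetric])
  have ww: "w * cnj w = of_real (norm w ^ 2)" by (rule complex_norm_square[symmetric])
  have "Dfun Z = ((1 - Z * cnj Z)/2)^2 - w * cnj w"
    by (simp add: Dfun_def GammaZZ_def GammaZbZb_def GammaZZb_def w_def)
  also have "\<dots> = of_real (((1 - \<rho>^2)/2)^2 - norm w ^ 2)" unfolding ZZ ww by simp
  finally have fin: "Dfun Z = of_real (((1 - \<rho>^2)/2)^2 - norm w ^ 2)" .
  have "(of_real (Fr Z) :: complex) = of_real (((1 - \<rho>^2)/2)^2 - norm w ^ 2)"
    unfolding Fr_def using Dfun_real[of Z] fin by metis
  hence "Fr Z = ((1 - \<rho>^2)/2)^2 - norm w ^ 2" by (simp only: of_real_eq_iff)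
  moreover have "norm w \<ge> \<rho>^2 - \<rho>"
  proof -
    have "norm (Z^2) \<le> norm w + norm (cnj Z)" unfolding w_def
      by (metis norm_minus_commute norm_triangle_sub add.commute)
    thus ?thesis by (simp add: \<rho>_def norm_power)
  qed
  moreover have "\<bar>(1 - \<rho>^2)/2\<bar> < \<rho>^2 - \<rho>"
  proof -
    have r1: "\<rho> > 1" using assms by (simp add: \<rho>_def)
    have "\<rho>*\<rho> > 1*1" using r1 by (intro mult_strict_mono) auto
    hence "\<bar>(1 - \<rho>^2)/2\<bar> = (\<rho>^2 - 1)/2" by (simp add: power2_eq_square)
    also have "\<dots> < \<rho>^2 - \<rho>"
    proof -
      have "(\<rho>-1)*(\<rho>-1) > 0" using r1 by simp
      hence "0 < \<rho>*\<rho> - 2*\<rho> + 1" by (simp add: algebra_simps)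
      thus ?thesis unfolding power2_eq_square by (simp add: field_simps)
    qed
    finally show ?thesis .
  qed
  ultimately have FZ: "Fr Z = ((1 - \<rho>^2)/2)^2 - norm w ^ 2" and lt: "\<bar>(1 - \<rho>^2)/2\<bar> < norm w"
    by linarith+
  have "\<bar>(1 - \<rho>^2)/2\<bar> ^ 2 < norm w ^ 2"
    by (rule power_strict_mono[OF lt]) auto
  moreover have "\<bar>(1 - \<rho>^2)/2\<bar> ^ 2 = ((1 - \<rho>^2)/2)^2" by (rule power2_abs)
  ultimately show ?thesis unfolding FZ by linarith
qed

lemma part1: "\<forall>Z\<in>deltoid_domain. Im (Dfun Z) = 0 \<and> Re (Dfun Z) > 0"
proof -
  note J = jordan
  have nz: "\<forall>x\<in>S. Fr x \<noteq> 0" if "S \<inter> deltoid_curve = {}" for S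
    using that Fr_zero by blast
  have oc: "outside deltoid_curve \<inter> deltoid_curve = {}" "inside deltoid_curve \<inter> deltoid_curve = {}"
    using J by blast+
  have F0: "Fr 0 > 0" by (simp add: Fr_def Dr_def)
  obtain Zb where Zb: "Zb \<in> outside deltoid_curve" "norm Zb > 1"
    using J unfolding bounded_iff by (meson not_le)
  have "0 \<notin> outside deltoid_curve"
  proof
    assume o: "0 \<in> outside deltoid_curve"
    have "Fr Zb > 0"
      by (rule conn_sign[of "outside deltoid_curve" Fr 0]) (use J o Zb F0 Fr_cont nz[OF oc(1)] in auto)
    thus False using Fr_big[OF Zb(2)] by simp
  qed
  moreover have "0 \<notin> deltoid_curve" using F0 Fr_zero[of 0] by auto
  ultimately have i0: "0 \<in> inside deltoid_curve" using J by blast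
  show ?thesis
  proof
    fix Z assume Z: "Z \<in> deltoid_domain"
    have "Fr Z > 0"
      by (rule conn_sign[of "inside deltoid_curve" Fr 0]) (use J i0 Z F0 Fr_cont nz[OF oc(2)] in \<open>auto simp: deltoid_domain_def\<close>)
    thus "Im (Dfun Z) = 0 \<and> Re (Dfun Z) > 0" by (simp add: Dfun_real Fr_def)
  qed
qed



lemma dir_x: assumes "g differentiable (at Z)"
  shows "(\<lambda>t. g (Complex t (Im Z))) differentiable (at (Re Z))"
proof -
  have "((\<lambda>t. Complex t (Im Z)) has_derivative (\<lambda>h. complex_of_real h)) (at (Re Z))"
    unfolding Complex_eq by (auto intro!: derivative_eq_intros)
  hence d: "(\<lambda>t. Complex t (Im Z)) differentiable (at (Re Z))" by (rule differentiableI)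
  have "g differentiable (at (Complex (Re Z) (Im Z)))" using assms by simp
  from differentiable_chain_at[OF d this] show ?thesis by (simp add: o_def)
qed

lemma dir_y: assumes "g differentiable (at Z)"
  shows "(\<lambda>t. g (Complex (Re Z) t)) differentiable (at (Im Z))"
proof -
  have "((\<lambda>t. Complex (Re Z) t) has_derivative (\<lambda>h. \<i> * complex_of_real h)) (at (Im Z))"
    unfolding Complex_eq by (auto intro!: derivative_eq_intros)
  hence d: "(\<lambda>t. Complex (Re Z) t) differentiable (at (Im Z))" by (rule differentiableI)
  have "g differentiable (at (Complex (Re Z) (Im Z)))" using assms by simp
  from differentiable_chain_at[OF d this] show ?thesis by (simp add: o_def)
qed

definition Dt :: "real \<Rightarrow> real \<Rightarrow> real" where
  "Dt t s = 2*((1-t^2-s^2)/2)*(-t) - (2*(t-t^2+s^2)*(1-2*t) + 2*(s+2*t* s)*(2* s))"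
definition Ds :: "real \<Rightarrow> real \<Rightarrow> real" where
  "Ds t s = 2*((1-t^2-s^2)/2)*(-s) - (2*(t-t^2+s^2)*(2* s) + 2*(s+2*t* s)*(1+2*t))"

lemma Dr_dt: "((\<lambda>t. Dr t s) has_real_derivative Dt t s) (at t)"
  unfolding Dr_def Dt_def
  by (auto intro!: derivative_eq_intros) (simp add: field_simps power2_eq_square)

lemma Dr_ds: "((\<lambda>s. Dr t s) has_real_derivative Ds t s) (at s)"
  unfolding Dr_def Ds_def
  by (auto intro!: derivative_eq_intros) (simp add: field_simps power2_eq_square)

lemma key_x: "(1 + 2*t - 3*t^2 + s^2)/4 * Dt t s + (- s - 2*t* s)/2 * Ds t s = -3*t*Dr t s"
  unfolding Dt_def Ds_def Dr_def by (simp add: field_simps power2_eq_square)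

lemma key_y: "(- s - 2*t* s)/2 * Dt t s + (1 - 2*t + t^2 - 3* s^2)/4 * Ds t s = -3* s*Dr t s"
  unfolding Dt_def Ds_def Dr_def by (simp add: field_simps power2_eq_square)

lemma final_alg:
  fixes R0 D0 gX gY gXY p q A B C E Dtx Dsy x y :: real
  assumes R0: "R0 > 0" and D0: "D0 > 0"
    and kx: "gX*Dtx + gXY*Dsy = -3*x*D0" and ky: "gXY*Dtx + gY*Dsy = -3*y*D0"
  shows "gX*A + gXY*B + gXY*C + gY*E + (-x)*p + (-y)*q =
    (1/R0) * (((-1/2)*(R0/D0)*Dtx*(gX*p + gXY*q) + R0*(((2-6*x)/4*p + gX*A) + ((-y)*q + gXY*B)))
            + ((-1/2)*(R0/D0)*Dsy*(gXY*p + gY*q) + R0*(((-1-2*x)/2*p + gXY*C) + ((-6*y)/4*q + gY*E))))"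
proof -
  have h: "(-1/2)*(R0/D0)*Dtx*(gX*p + gXY*q) + (-1/2)*(R0/D0)*Dsy*(gXY*p + gY*q) = R0*(3/2)*(x*p+y*q)"
  proof -
    have "(-1/2)*(R0/D0)*Dtx*(gX*p + gXY*q) + (-1/2)*(R0/D0)*Dsy*(gXY*p + gY*q)
        = (-1/2)*(R0/D0)*(p*(gX*Dtx + gXY*Dsy) + q*(gXY*Dtx + gY*Dsy))" by (simp add: algebra_simps add_divide_distrib)
    also have "\<dots> = (-1/2)*(R0/D0)*(p*(-3*x*D0) + q*(-3*y*D0))" by (simp only: kx ky)
    also have "\<dots> = R0*(3/2)*(x*p+y*q)" using D0 by (simp add: field_simps)
    finally show ?thesis .
  qed
  have "(1/R0) * (((-1/2)*(R0/D0)*Dtx*(gX*p + gXY*q) + R0*(((2-6*x)/4*p + gX*A) + ((-y)*q + gXY*B)))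
            + ((-1/2)*(R0/D0)*Dsy*(gXY*p + gY*q) + R0*(((-1-2*x)/2*p + gXY*C) + ((-6*y)/4*q + gY*E))))
      = (1/R0) * (((-1/2)*(R0/D0)*Dtx*(gX*p + gXY*q) + (-1/2)*(R0/D0)*Dsy*(gXY*p + gY*q))
           + R0*(((2-6*x)/4*p + gX*A) + ((-y)*q + gXY*B) + ((-1-2*x)/2*p + gXY*C) + ((-6*y)/4*q + gY*E)))"
    by (simp add: algebra_simps)
  also have "\<dots> = (1/R0) * (R0*(3/2)*(x*p+y*q)
           + R0*(((2-6*x)/4*p + gX*A) + ((-y)*q + gXY*B) + ((-1-2*x)/2*p + gXY*C) + ((-6*y)/4*q + gY*E)))"
    by (simp only: h)
  also have "\<dots> = gX*A + gXY*B + gXY*C + gY*E + (-x)*p + (-y)*q"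
    using R0 by (simp add: field_simps)
  finally show ?thesis by simp
qed

lemma part3:
  assumes pos: "Re (Dfun Z) > 0" and dP: "pdx f differentiable (at Z)" and dQ: "pdy f differentiable (at Z)"
  shows "Lop f Z = (1 / rho Z) *
               (pdx (\<lambda>W. rho W * (gxx W * pdx f W + gxy W * pdy f W)) Z
              + pdy (\<lambda>W. rho W * (gxy W * pdx f W + gyy W * pdy f W)) Z)"
proof -
  define x where "x = Re Z"
  define y where "y = Im Z"
  define D0 where "D0 = Dr x y"
  have D0: "D0 > 0" using pos Dfun_real[of Z] by (simp add: D0_def x_def y_def)
  define R0 where "R0 = D0 powr (-1/2)"
  have R0: "R0 > 0" using D0 by (simp add: R0_def)
  have rhoC: "rho (Complex t s) = Dr t s powr (-1/2)" for t s by (simp add: rho_def Dfun_real)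
  have rhoZ: "rho Z = R0" using rhoC[of x y] by (simp add: x_def y_def R0_def D0_def)
  define P where "P = (\<lambda>t. pdx f (Complex t y))"
  define Q where "Q = (\<lambda>t. pdy f (Complex t y))"
  define P2 where "P2 = (\<lambda>s. pdx f (Complex x s))"
  define Q2 where "Q2 = (\<lambda>s. pdy f (Complex x s))"
  define A where "A = deriv P x"
  define B where "B = deriv Q x"
  define C where "C = deriv P2 y"
  define E where "E = deriv Q2 y"
  have PA: "(P has_real_derivative A) (at x)"
    using dir_x[OF dP] DERIV_deriv_iff_real_differentiable by (auto simp: A_def P_def x_def y_def)
  have QB: "(Q has_real_derivative B) (at x)"
    using dir_x[OF dQ] DERIV_deriv_iff_real_differentiable by (auto simp: B_def Q_def x_def y_def)
  have PC: "(P2 has_real_derivative C) (at y)"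
    using dir_y[OF dP] DERIV_deriv_iff_real_differentiable by (auto simp: C_def P2_def x_def y_def)
  have QE: "(Q2 has_real_derivative E) (at y)"
    using dir_y[OF dQ] DERIV_deriv_iff_real_differentiable by (auto simp: E_def Q2_def x_def y_def)
  have pw: "D0 powr (-1/2 - of_nat 1) = R0 / D0"
  proof -
    have "D0 powr (-1/2 - of_nat 1) = D0 powr (-1/2) / D0 powr (of_nat 1)" by (rule powr_diff)
    thus ?thesis using D0 by (simp add: R0_def)
  qed
  have Rx: "((\<lambda>t. Dr t y powr (-1/2)) has_real_derivative (-1/2) * (R0/D0) * Dt x y) (at x)"
  proof -
    have pos: "0 < Dr x y" using D0 by (simp add: D0_def)
    have pw': "Dr x y powr (-1/2 - of_nat 1) = R0 / D0" using pw by (simp only: D0_def)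
    show ?thesis using DERIV_fun_powr[OF Dr_dt[where t=x and s=y] pos, of "-1/2"] unfolding pw' .
  qed
  have Ry: "((\<lambda>s. Dr x s powr (-1/2)) has_real_derivative (-1/2) * (R0/D0) * Ds x y) (at y)"
  proof -
    have pos: "0 < Dr x y" using D0 by (simp add: D0_def)
    have pw': "Dr x y powr (-1/2 - of_nat 1) = R0 / D0" using pw by (simp only: D0_def)
    show ?thesis using DERIV_fun_powr[OF Dr_ds[where t=x and s=y] pos, of "-1/2"] unfolding pw' .
  qed
  have gXd: "((\<lambda>t. (1 + 2*t - 3*t^2 + y^2)/4) has_real_derivative (2-6*x)/4) (at x)"
    by (auto intro!: derivative_eq_intros simp: field_simps)
  have gXYd: "((\<lambda>t. (- y - 2*t*y)/2) has_real_derivative (-y)) (at x)"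
    by (auto intro!: derivative_eq_intros simp: field_simps)
  have gXYd2: "((\<lambda>s. (- s - 2*x* s)/2) has_real_derivative (-1-2*x)/2) (at y)"
    by (auto intro!: derivative_eq_intros simp: field_simps)
  have gYd: "((\<lambda>s. (1 - 2*x + x^2 - 3* s^2)/4) has_real_derivative (-6*y)/4) (at y)"
    by (auto intro!: derivative_eq_intros simp: field_simps)
  have Hx: "((\<lambda>t. Dr t y powr (-1/2) * ((1 + 2*t - 3*t^2 + y^2)/4 * P t + (- y - 2*t*y)/2 * Q t))
     has_real_derivative
       (-1/2) * (R0/D0) * Dt x y * ((1 + 2*x - 3*x^2 + y^2)/4 * P x + (- y - 2*x*y)/2 * Q x)
       + R0 * (((2-6*x)/4 * P x + (1 + 2*x - 3*x^2 + y^2)/4 * A) + ((-y) * Q x + (- y - 2*x*y)/2 * B))) (at x)"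
    by (rule DERIV_cong[OF DERIV_mult[OF Rx DERIV_add[OF DERIV_mult[OF gXd PA] DERIV_mult[OF gXYd QB]]]]) (simp add: algebra_simps R0_def D0_def)
  have Hy: "((\<lambda>s. Dr x s powr (-1/2) * ((- s - 2*x* s)/2 * P2 s + (1 - 2*x + x^2 - 3* s^2)/4 * Q2 s))
     has_real_derivative
       (-1/2) * (R0/D0) * Ds x y * ((- y - 2*x*y)/2 * P2 y + (1 - 2*x + x^2 - 3*y^2)/4 * Q2 y)
       + R0 * (((-1-2*x)/2 * P2 y + (- y - 2*x*y)/2 * C) + ((-6*y)/4 * Q2 y + (1 - 2*x + x^2 - 3*y^2)/4 * E))) (at y)"
    by (rule DERIV_cong[OF DERIV_mult[OF Ry DERIV_add[OF DERIV_mult[OF gXYd2 PC] DERIV_mult[OF gYd QE]]]]) (simp add: algebra_simps R0_def D0_def)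
  have fx: "(\<lambda>t. rho (Complex t y) * (gxx (Complex t y) * pdx f (Complex t y) + gxy (Complex t y) * pdy f (Complex t y)))
      = (\<lambda>t. Dr t y powr (-1/2) * ((1 + 2*t - 3*t^2 + y^2)/4 * P t + (- y - 2*t*y)/2 * Q t))"
    by (simp add: rhoC gxx_eq gxy_eq P_def Q_def)
  have fy: "(\<lambda>s. rho (Complex x s) * (gxy (Complex x s) * pdx f (Complex x s) + gyy (Complex x s) * pdy f (Complex x s)))
      = (\<lambda>s. Dr x s powr (-1/2) * ((- s - 2*x* s)/2 * P2 s + (1 - 2*x + x^2 - 3* s^2)/4 * Q2 s))"
    by (simp add: rhoC gxy_eq gyy_eq P2_def Q2_def)
  have PQ: "P x = pdx f Z" "Q x = pdy f Z" "P2 y = pdx f Z" "Q2 y = pdy f Z"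
    by (simp_all add: P_def Q_def P2_def Q2_def x_def y_def)
  have e1: "pdx (\<lambda>W. rho W * (gxx W * pdx f W + gxy W * pdy f W)) Z =
       (-1/2) * (R0/D0) * Dt x y * ((1 + 2*x - 3*x^2 + y^2)/4 * pdx f Z + (- y - 2*x*y)/2 * pdy f Z)
       + R0 * (((2-6*x)/4 * pdx f Z + (1 + 2*x - 3*x^2 + y^2)/4 * A) + ((-y) * pdy f Z + (- y - 2*x*y)/2 * B))"
    unfolding pdx_def[of "\<lambda>W. rho W * (gxx W * pdx f W + gxy W * pdy f W)"] x_def[symmetric] y_def[symmetric] fx
    using DERIV_imp_deriv[OF Hx] by (simp only: PQ)
  have e2: "pdy (\<lambda>W. rho W * (gxy W * pdx f W + gyy W * pdy f W)) Z =
       (-1/2) * (R0/D0) * Ds x y * ((- y - 2*x*y)/2 * pdx f Z + (1 - 2*x + x^2 - 3*y^2)/4 * pdy f Z)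
       + R0 * (((-1-2*x)/2 * pdx f Z + (- y - 2*x*y)/2 * C) + ((-6*y)/4 * pdy f Z + (1 - 2*x + x^2 - 3*y^2)/4 * E))"
    unfolding pdy_def[of "\<lambda>W. rho W * (gxy W * pdx f W + gyy W * pdy f W)"] x_def[symmetric] y_def[symmetric] fy
    using DERIV_imp_deriv[OF Hy] by (simp only: PQ)
  have L: "Lop f Z = (1 + 2*x - 3*x^2 + y^2)/4 * A + (- y - 2*x*y)/2 * B + (- y - 2*x*y)/2 * C
      + (1 - 2*x + x^2 - 3*y^2)/4 * E + (-x) * pdx f Z + (-y) * pdy f Z"
    unfolding Lop_def gxx_eq gxy_eq gyy_eq Lx_def Ly_def A_def B_def C_def E_def P_def Q_def P2_def Q2_def
      x_def y_def pdx_def[of "pdx f"] pdx_def[of "pdy f"] pdy_def[of "pdx f"] pdy_def[of "pdy f"]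
    by simp
  show ?thesis
    unfolding L e1 e2 rhoZ
    by (rule final_alg[OF R0 D0 key_x[where t=x and s=y, folded D0_def] key_y[where t=x and s=y, folded D0_def]])
qed

theorem proposition3p5:
  shows "(\<forall>Z\<in>deltoid_domain. Im (Dfun Z) = 0 \<and> Re (Dfun Z) > 0)
    \<and> {Z. Dfun Z = 0} = deltoid_curve
    \<and> frontier deltoid_domain = deltoid_curve
    \<and> (\<forall>f :: complex \<Rightarrow> real.
          (\<forall>Z\<in>deltoid_domain. f differentiable (at Z) \<and> pdx f differentiable (at Z)
                               \<and> pdy f differentiable (at Z)) \<longrightarrow>
          (\<forall>Z\<in>deltoid_domain.
             Lop f Z = (1 / rho Z) *
               (pdx (\<lambda>W. rho W * (gxx W * pdx f W + gxy W * pdy f W)) Z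
              + pdy (\<lambda>W. rho W * (gxy W * pdx f W + gyy W * pdy f W)) Z)))
    \<and> (\<forall>a b :: real.
          let z1 = exp (\<i> * of_real a);
              z2 = exp (\<i> * of_real (- a / 2 + sqrt 3 / 2 * b));
              z3 = exp (\<i> * of_real (- a / 2 - sqrt 3 / 2 * b));
              Z = (z1 + z2 + z3) / 3
          in Dfun Z = - ((z1 - z2)^2 * (z2 - z3)^2 * (z3 - z1)^2) / (2^2 * 3^3))"
  proof -
  have p1: "\<forall>Z\<in>deltoid_domain. Im (Dfun Z) = 0 \<and> Re (Dfun Z) > 0" by (rule part1)
  have p2: "{Z. Dfun Z = 0} = deltoid_curve" using D_zero_curve by auto
  have p3: "frontier deltoid_domain = deltoid_curve" using jordan by (simp add: deltoid_domain_def)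
  have p4: "\<forall>f :: complex \<Rightarrow> real.
          (\<forall>Z\<in>deltoid_domain. f differentiable (at Z) \<and> pdx f differentiable (at Z)
                               \<and> pdy f differentiable (at Z)) \<longrightarrow>
          (\<forall>Z\<in>deltoid_domain.
             Lop f Z = (1 / rho Z) *
               (pdx (\<lambda>W. rho W * (gxx W * pdx f W + gxy W * pdy f W)) Z
              + pdy (\<lambda>W. rho W * (gxy W * pdx f W + gyy W * pdy f W)) Z))"
    using part3 p1 by blast
  show ?thesis using p1 p2 p3 p4 part4 by blast
qed

end
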